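(* Consider any sequences $\{(x_k,y_k,\gamma_k)\}_{k\ge0}$, $\{(\tilde x_k,u_k,\tilde\gamma_k)\}_{k\ge1}$ generated by the inexact symmetric proximal ADMM described in the context. Then for every $k\ge1$: $$G(x_{k-1}-x_k)\in\partial f(\tilde x_k)-A^*\tilde\gamma_k,$$ $$\Big(H+\tfrac{(\tau-\tau\theta+\theta)\beta}{\tau+\theta}B^*B\Big)(y_{k-1}-y_k)-\tfrac{\tau}{\tau+\theta}B^*(\gamma_{k-1}-\gamma_k)\in\partial g(y_k)-B^*\tilde\gamma_k,$$ $$-\tfrac{\tau}{\tau+\theta}B(y_{k-1}-y_k)+\tfrac{1}{(\tau+\theta)\beta}(\gamma_{k-1}-\gamma_k)=A\tilde x_k+By_k-b.$$ As a consequence, $M(z_{k-1}-z_k)\in T(\tilde z_k)$ for every $k\ge1$, where $z_k=(x_k,y_k,\gamma_k)$ for $k\ge0$ and $\tilde z_k=(\tilde x_k,y_k,\tilde\gamma_k)$ for $k\ge1$.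
   Context: Let $f:\mathbb{R}^n\to(-\infty,\infty]$ and $g:\mathbb{R}^p\to(-\infty,\infty]$ be proper closed convex functions, $A\in\mathbb{R}^{m\times n}$, $B\in\mathbb{R}^{m\times p}$, $b\in\mathbb{R}^m$ (problem: $\min\{f(x)+g(y):Ax+By=b\}$). Standing assumption: there exists $(x^*,y^*,\gamma^* )$ solving the Lagrangian system $0\in\partial f(x)-A^*\gamma$, $0\in\partial g(y)-B^*\gamma$, $0=Ax+By-b$. Here $\partial$ is the subdifferential, $A^*$ the transpose, $\mathbb{S}^n_{++}$ ($\mathbb{S}^p_+$) the symmetric positive definite (semidefinite) matrices, and $\|z\|_Q=\sqrt{\langle Qz,z\rangle}$ for $Q$ positive semidefinite. Algorithm (inexact symmetric proximal ADMM): given $(x_0,y_0,\gamma_0)\in\mathbb{R}^n\times\mathbb{R}^p\times\mathbb{R}^m$, $\beta>0$, $\tilde\sigma,\hat\sigma\in[0,1)$, $G\in\mathbb{S}^n_{++}$, $H\in\mathbb{S}^p_+$, and $(\tau,\theta)\in\mathcal R_{\tilde\sigma}:=\{(\tau,\theta):\tau\in(-1,1-\tilde\sigma),\ \tau+\theta>0,\ (1-\tau^2)(2-\tau-\theta-\tilde\sigma)-(1-\theta)^2(1-\tau-\tilde\sigma)>0\}$. For $k=1,2,\dots$: compute $(\tilde x_k,u_k)$ with $u_k\in\partial f(\tilde x_k)-A^*\tilde\gamma_k$ and $\|\tilde x_k-x_{k-1}+G^{-1}u_k\|_G^2\le\frac{\tilde\sigma}{\beta}\|\tilde\gamma_k-\gamma_{k-1}\|^2+\hat\sigma\|\tilde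 x_k-x_{k-1}\|_G^2$, where $\tilde\gamma_k=\gamma_{k-1}-\beta(A\tilde x_k+By_{k-1}-b)$; set $\gamma_{k-1/2}=\gamma_{k-1}-\tau\beta(A\tilde x_k+By_{k-1}-b)$; let $y_k$ be an optimal solution of $\min_y\{g(y)-\langle\gamma_{k-1/2},By\rangle+\frac\beta2\|A\tilde x_k+By-b\|^2+\frac12\|y-y_{k-1}\|_H^2\}$; set $x_k=x_{k-1}-G^{-1}u_k$ and $\gamma_k=\gamma_{k-1/2}-\theta\beta(A\tilde x_k+By_k-b)$. Definitions: $T(x,y,\gamma)=(\partial f(x)-A^*\gamma,\ \partial g(y)-B^*\gamma,\ Ax+By-b)$ (a set-valued operator on $\mathbb{R}^n\times\mathbb{R}^p\times\mathbb{R}^m$); $M=\begin{bmatrix}G&0&0\\0&H+\frac{(\tau-\tau\theta+\theta)\beta}{\tau+\theta}B^*B&-\frac{\tau}{\tau+\theta}B^*\\0&-\frac{\tau}{\tau+\theta}B&\frac{1}{(\tau+\theta)\beta}I\end{bmatrix}$. *)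

theory Defs
  imports "HOL-Analysis.Analysis" "HOL-Library.Extended_Real"
begin

definition proper_fun :: "('a::real_inner \<Rightarrow> ereal) \<Rightarrow> bool" where
  "proper_fun f \<longleftrightarrow> (\<forall>x. f x \<noteq> -\<infinity>) \<and> (\<exists>x. f x < \<infinity>)"

definition convex_fun :: "('a::real_inner \<Rightarrow> ereal) \<Rightarrow> bool" where
  "convex_fun f \<longleftrightarrow> (\<forall>x y (t::real). 0 \<le> t \<and> t \<le> 1 \<longrightarrow>
      f ((1 - t) *\<^sub>R x + t *\<^sub>R y) \<le> ereal (1 - t) * f x + ereal t * f y)"

text \<open>Closed = lower semicontinuous = closed epigraph.\<close>
definition closed_fun :: "('a::real_inner \<Rightarrow> ereal) \<Rightarrow> bool" where
  "closed_fun f \<longleftrightarrow> closed {(x, t::real). f x \<le> ereal t}"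

text \<open>Subdifferential (empty outside the effective domain).\<close>
definition subdiff :: "('a::real_inner \<Rightarrow> ereal) \<Rightarrow> 'a \<Rightarrow> 'a set" where
  "subdiff f x = {v. f x < \<infinity> \<and> (\<forall>y. f x + ereal (v \<bullet> (y - x)) \<le> f y)}"

definition qnorm2 :: "real^'n^'n \<Rightarrow> real^'n \<Rightarrow> real" where
  "qnorm2 Q z = (Q *v z) \<bullet> z"

definition sym_pd :: "real^'n^'n \<Rightarrow> bool" where
  "sym_pd Q \<longleftrightarrow> transpose Q = Q \<and> (\<forall>z. z \<noteq> 0 \<longrightarrow> (Q *v z) \<bullet> z > 0)"

definition sym_psd :: "real^'n^'n \<Rightarrow> bool" where
  "sym_psd Q \<longleftrightarrow> transpose Q = Q \<and> (\<forall>z. (Q *v z) \<bullet> z \<ge> 0)"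

definition region_R :: "real \<Rightarrow> real \<Rightarrow> real \<Rightarrow> bool" where
  "region_R s \<tau> \<theta> \<longleftrightarrow> -1 < \<tau> \<and> \<tau> < 1 - s \<and> \<tau> + \<theta> > 0 \<and>
     (1 - \<tau>\<^sup>2) * (2 - \<tau> - \<theta> - s) - (1 - \<theta>)\<^sup>2 * (1 - \<tau> - s) > 0"

definition T_op :: "(real^'n \<Rightarrow> ereal) \<Rightarrow> (real^'p \<Rightarrow> ereal) \<Rightarrow> real^'n^'m \<Rightarrow> real^'p^'m
     \<Rightarrow> real^'m \<Rightarrow> (real^'n) \<times> (real^'p) \<times> (real^'m) \<Rightarrow> ((real^'n) \<times> (real^'p) \<times> (real^'m)) set" where
  "T_op f g A B b z = (case z of (x, y, \<gamma>) \<Rightarrow>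
     {(v - transpose A *v \<gamma>, w - transpose B *v \<gamma>, A *v x + B *v y - b) | v w.
        v \<in> subdiff f x \<and> w \<in> subdiff g y})"

definition M_op :: "real^'n^'n \<Rightarrow> real^'p^'p \<Rightarrow> real^'p^'m \<Rightarrow> real \<Rightarrow> real \<Rightarrow> real
     \<Rightarrow> (real^'n) \<times> (real^'p) \<times> (real^'m) \<Rightarrow> (real^'n) \<times> (real^'p) \<times> (real^'m)" where
  "M_op G H B \<beta> \<tau> \<theta> z = (case z of (x, y, \<gamma>) \<Rightarrow>
     (G *v x,
      (H + ((\<tau> - \<tau> * \<theta> + \<theta>) * \<beta> / (\<tau> + \<theta>)) *\<^sub>R (transpose B ** B)) *v y
        - (\<tau> / (\<tau> + \<theta>)) *\<^sub>R (transpose B *v \<gamma>),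
      - (\<tau> / (\<tau> + \<theta>)) *\<^sub>R (B *v y) + (1 / ((\<tau> + \<theta>) * \<beta>)) *\<^sub>R \<gamma>))"

end

theory Submission imports Defs begin

lemma pd_inv_apply:
  fixes G :: "real^'n^'n"
  assumes "sym_pd G"
  shows "G *v (matrix_inv G *v u) = u"
proof -
  have "\<forall>x. G *v x = 0 \<longrightarrow> x = 0"
    using assms unfolding sym_pd_def by (metis inner_zero_left less_irrefl)
  then have "\<exists>B. B ** G = mat 1" using matrix_left_invertible_ker by blast
  then have "invertible G" using invertible_left_inverse by blast
  then have "G ** matrix_inv G = mat 1"
    unfolding invertible_def matrix_inv_def by (rule someI2_ex) auto
  then show ?thesis by (metis matrix_vector_mul_assoc matrix_vector_mul_lid)
qed

lemma small_t:
  fixes a b c :: real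
  assumes "\<And>t. 0 < t \<Longrightarrow> t \<le> 1 \<Longrightarrow> a \<le> b + t * c"
  shows "a \<le> b"
proof (rule ccontr)
  assume "\<not> a \<le> b"
  define t where "t = min 1 ((a - b) / (2 * (\<bar>c\<bar> + 1)))"
  have t0: "0 < t" "t \<le> 1" using \<open>\<not> a \<le> b\<close> by (auto simp: t_def)
  have "t * c \<le> t * (\<bar>c\<bar> + 1)" using t0 by (intro mult_left_mono) auto
  also have "\<dots> \<le> (a - b) / (2 * (\<bar>c\<bar> + 1)) * (\<bar>c\<bar> + 1)"
    by (intro mult_right_mono) (auto simp: t_def)
  also have "\<dots> = (a - b) / 2" by (simp add: field_simps)
  finally have "t * c \<le> (a - b) / 2" .
  then show False using assms[OF t0] \<open>\<not> a \<le> b\<close> by argo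
qed

lemma subgrad_min:
  fixes g :: "'a::real_inner \<Rightarrow> ereal" and q :: "'a \<Rightarrow> real"
  assumes pg: "proper_fun g" and cg: "convex_fun g"
    and mn: "\<And>w. g y + ereal (q y) \<le> g w + ereal (q w)"
    and qe: "\<And>e t. q (y + t *\<^sub>R e) = q y + t * (v \<bullet> e) + t\<^sup>2 * c e"
  shows "- v \<in> subdiff g y"
proof -
  obtain w0 where w0: "g w0 < \<infinity>" using pg unfolding proper_fun_def by auto
  have "g y + ereal (q y) < \<infinity>" using mn[of w0] w0
    by (metis PInfty_neq_ereal(1) ereal_less_PInfty ereal_plus_eq_PInfty order_le_less_trans)
  then have "g y \<noteq> \<infinity>" by auto
  moreover have "g y \<noteq> -\<infinity>" using pg unfolding proper_fun_def by auto
  ultimately obtain a where a: "g y = ereal a" by (cases "g y") auto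
  have "g y + ereal (- v \<bullet> (w - y)) \<le> g w" for w
  proof (cases "g w = \<infinity>")
    case True then show ?thesis by simp
  next
    case False
    moreover have "g w \<noteq> -\<infinity>" using pg unfolding proper_fun_def by auto
    ultimately obtain bw where bw: "g w = ereal bw" by (cases "g w") auto
    have "a \<le> bw + (v \<bullet> (w - y)) + t * c (w - y)" if t: "0 < t" "t \<le> 1" for t
    proof -
      have eq: "(1 - t) *\<^sub>R y + t *\<^sub>R w = y + t *\<^sub>R (w - y)" by (simp add: algebra_simps)
      have "g (y + t *\<^sub>R (w - y)) \<le> ereal (1 - t) * g y + ereal t * g w"
        using cg t unfolding convex_fun_def by (metis eq less_imp_le)
      also have "\<dots> = ereal ((1 - t) * a + t * bw)" by (simp add: a bw)
      finally have gl: "g (y + t *\<^sub>R (w - y)) \<le> ereal ((1 - t) * a + t * bw)" .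
      have "ereal (a + q y) \<le> g (y + t *\<^sub>R (w - y)) + ereal (q (y + t *\<^sub>R (w - y)))"
        using mn[of "y + t *\<^sub>R (w - y)"] by (simp add: a)
      also have "\<dots> \<le> ereal ((1 - t) * a + t * bw) + ereal (q (y + t *\<^sub>R (w - y)))"
        using gl by (rule add_right_mono)
      finally have "a + q y \<le> (1 - t) * a + t * bw + q (y + t *\<^sub>R (w - y))" by simp
      then have "t * a \<le> t * (bw + (v \<bullet> (w - y)) + t * c (w - y))"
        unfolding qe by (simp add: algebra_simps power2_eq_square)
      then show ?thesis using t by simp
    qed
    then have "a \<le> bw + (v \<bullet> (w - y))" by (rule small_t)
    then show ?thesis by (simp add: a bw)
  qed
  then show ?thesis unfolding subdiff_def using a by auto
qed
theorem theorem2p3: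
  fixes f :: "real^'n \<Rightarrow> ereal" and g :: "real^'p \<Rightarrow> ereal"
    and A :: "real^'n^'m" and B :: "real^'p^'m" and b :: "real^'m"
    and G :: "real^'n^'n" and H :: "real^'p^'p"
    and \<beta> \<sigma>t \<sigma>h \<tau> \<theta> :: real
    and x :: "nat \<Rightarrow> real^'n" and y :: "nat \<Rightarrow> real^'p" and \<gamma> :: "nat \<Rightarrow> real^'m"
    and xt :: "nat \<Rightarrow> real^'n" and u :: "nat \<Rightarrow> real^'n" and \<gamma>t :: "nat \<Rightarrow> real^'m"
    and \<gamma>h :: "nat \<Rightarrow> real^'m"
  assumes f: "proper_fun f" "closed_fun f" "convex_fun f"
    and g: "proper_fun g" "closed_fun g" "convex_fun g"
    and sol: "\<exists>xs ys gs. transpose A *v gs \<in> subdiff f xs \<and> transpose B *v gs \<in> subdiff g ys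
                 \<and> A *v xs + B *v ys - b = 0"
    and \<beta>: "\<beta> > 0"
    and \<sigma>t: "0 \<le> \<sigma>t" "\<sigma>t < 1" and \<sigma>h: "0 \<le> \<sigma>h" "\<sigma>h < 1"
    and G: "sym_pd G" and H: "sym_psd H"
    and reg: "region_R \<sigma>t \<tau> \<theta>"
    and gt: "\<And>k. k \<ge> 1 \<Longrightarrow> \<gamma>t k = \<gamma> (k-1) - \<beta> *\<^sub>R (A *v xt k + B *v y (k-1) - b)"
    and u: "\<And>k. k \<ge> 1 \<Longrightarrow> u k \<in> (\<lambda>v. v - transpose A *v \<gamma>t k) ` subdiff f (xt k)"
    and inex: "\<And>k. k \<ge> 1 \<Longrightarrow>
        qnorm2 G (xt k - x (k-1) + matrix_inv G *v u k)
          \<le> \<sigma>t / \<beta> * (norm (\<gamma>t k - \<gamma> (k-1)))\<^sup>2 + \<sigma>h * qnorm2 G (xt k - x (k-1))"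
    and gh: "\<And>k. k \<ge> 1 \<Longrightarrow> \<gamma>h k = \<gamma> (k-1) - (\<tau> * \<beta>) *\<^sub>R (A *v xt k + B *v y (k-1) - b)"
    and ymin: "\<And>k w. k \<ge> 1 \<Longrightarrow>
        g (y k) + ereal (- (\<gamma>h k \<bullet> (B *v y k)) + \<beta> / 2 * (norm (A *v xt k + B *v y k - b))\<^sup>2
                         + 1/2 * qnorm2 H (y k - y (k-1)))
        \<le> g w + ereal (- (\<gamma>h k \<bullet> (B *v w)) + \<beta> / 2 * (norm (A *v xt k + B *v w - b))\<^sup>2
                         + 1/2 * qnorm2 H (w - y (k-1)))"
    and xk: "\<And>k. k \<ge> 1 \<Longrightarrow> x k = x (k-1) - matrix_inv G *v u k"
    and gk: "\<And>k. k \<ge> 1 \<Longrightarrow> \<gamma> k = \<gamma>h k - (\<theta> * \<beta>) *\<^sub>R (A *v xt k + B *v y k - b)"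
    and k: "k \<ge> 1"
  shows "G *v (x (k-1) - x k) \<in> (\<lambda>v. v - transpose A *v \<gamma>t k) ` subdiff f (xt k)
       \<and> (H + ((\<tau> - \<tau> * \<theta> + \<theta>) * \<beta> / (\<tau> + \<theta>)) *\<^sub>R (transpose B ** B)) *v (y (k-1) - y k)
           - (\<tau> / (\<tau> + \<theta>)) *\<^sub>R (transpose B *v (\<gamma> (k-1) - \<gamma> k))
           \<in> (\<lambda>w. w - transpose B *v \<gamma>t k) ` subdiff g (y k)
       \<and> - (\<tau> / (\<tau> + \<theta>)) *\<^sub>R (B *v (y (k-1) - y k)) + (1 / ((\<tau> + \<theta>) * \<beta>)) *\<^sub>R (\<gamma> (k-1) - \<gamma> k)
           = A *v xt k + B *v y k - b
       \<and> M_op G H B \<beta> \<tau> \<theta> ((x (k-1), y (k-1), \<gamma> (k-1)) - (x k, y k, \<gamma> k))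
           \<in> T_op f g A B b (xt k, y k, \<gamma>t k)"
proof -
  define Bt where "Bt = transpose B"
  define R where "R = A *v xt k + B *v y k - b"
  define d where "d = y (k-1) - y k"
  define P where "P = B *v d"
  define g0 where "g0 = \<gamma> (k-1)"
  have tp: "\<tau> + \<theta> > 0" using reg unfolding region_R_def by auto
  have s_eq: "A *v xt k + B *v y (k-1) - b = R + P"
    by (simp add: R_def P_def d_def matrix_vector_mult_diff_distrib)
  have ght: "\<gamma>h k = g0 - (\<tau> * \<beta>) *\<^sub>R (R + P)" using gh[OF k] s_eq g0_def by simp
  have gtt: "\<gamma>t k = g0 - \<beta> *\<^sub>R (R + P)" using gt[OF k] s_eq g0_def by simp
  have gkt: "\<gamma> k = g0 - (\<tau> * \<beta>) *\<^sub>R (R + P) - (\<theta> * \<beta>) *\<^sub>R R"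
    using gk[OF k] ght R_def by simp
  have dg: "\<gamma> (k-1) - \<gamma> k = ((\<tau> + \<theta>) * \<beta>) *\<^sub>R R + (\<tau> * \<beta>) *\<^sub>R P"
    unfolding gkt g0_def by (simp add: algebra_simps)
  have p1: "G *v (x (k-1) - x k) \<in> (\<lambda>v. v - transpose A *v \<gamma>t k) ` subdiff f (xt k)"
    using xk[OF k] u[OF k] pd_inv_apply[OF G] by simp
  have p3: "- (\<tau> / (\<tau> + \<theta>)) *\<^sub>R (B *v (y (k-1) - y k)) + (1 / ((\<tau> + \<theta>) * \<beta>)) *\<^sub>R (\<gamma> (k-1) - \<gamma> k)
           = A *v xt k + B *v y k - b"
  proof -
    have s1: "(1 / ((\<tau> + \<theta>) * \<beta>)) * ((\<tau> + \<theta>) * \<beta>) = 1" using tp \<beta> by simp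
    have s2: "(1 / ((\<tau> + \<theta>) * \<beta>)) * (\<tau> * \<beta>) = \<tau> / (\<tau> + \<theta>)" using tp \<beta> by simp
    show ?thesis unfolding dg R_def[symmetric] d_def[symmetric] P_def[symmetric]
      using tp \<beta> by (simp add: scaleR_add_right s1 s2)
  qed
  define q where "q w = - (\<gamma>h k \<bullet> (B *v w)) + \<beta> / 2 * (norm (A *v xt k + B *v w - b))\<^sup>2
                         + 1/2 * qnorm2 H (w - y (k-1))" for w
  define v where "v = Bt *v (\<beta> *\<^sub>R R - \<gamma>h k) + H *v (y k - y (k-1))"
  define c where "c e = \<beta> / 2 * ((B *v e) \<bullet> (B *v e)) + 1/2 * ((H *v e) \<bullet> e)" for e
  have Hsym: "(H *v a) \<bullet> e = a \<bullet> (H *v e)" for a e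
    using H unfolding sym_psd_def
    by (metis dot_lmul_matrix transpose_matrix_vector)
  have Bt: "(Bt *v a) \<bullet> e = a \<bullet> (B *v e)" for a e
    unfolding Bt_def by (metis dot_lmul_matrix transpose_matrix_vector)
  have qe: "q (y k + t *\<^sub>R e) = q (y k) + t * (v \<bullet> e) + t\<^sup>2 * c e" for e t
  proof -
    have e1: "A *v xt k + B *v (y k + t *\<^sub>R e) - b = R + t *\<^sub>R (B *v e)"
      by (simp add: R_def matrix_vector_right_distrib matrix_vector_mult_scaleR algebra_simps)
    have e2: "y k + t *\<^sub>R e - y (k-1) = (y k - y (k-1)) + t *\<^sub>R e" by simp
    have n1: "(norm (R + t *\<^sub>R w))\<^sup>2 = (norm R)\<^sup>2 + 2 * t * (R \<bullet> w) + t\<^sup>2 * (w \<bullet> w)" for w :: "real^'m"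
      unfolding power2_norm_eq_inner
      by (simp add: inner_add_left inner_add_right inner_commute[of w R] algebra_simps power2_eq_square)
    have n2: "(H *v (a + t *\<^sub>R e)) \<bullet> (a + t *\<^sub>R e) = (H *v a) \<bullet> a + 2 * t * ((H *v a) \<bullet> e) + t\<^sup>2 * ((H *v e) \<bullet> e)" for a
    proof -
      have "(H *v e) \<bullet> a = (H *v a) \<bullet> e" using Hsym[of e a] by (simp add: inner_commute)
      then show ?thesis
        by (simp add: matrix_vector_right_distrib matrix_vector_mult_scaleR inner_add_left inner_add_right algebra_simps power2_eq_square)
    qed
    have n3: "\<gamma>h k \<bullet> (B *v (y k + t *\<^sub>R e)) = \<gamma>h k \<bullet> (B *v y k) + t * (\<gamma>h k \<bullet> (B *v e))"
      by (simp add: matrix_vector_right_distrib matrix_vector_mult_scaleR inner_add_right)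
    have n4: "v \<bullet> e = \<beta> * (R \<bullet> (B *v e)) - \<gamma>h k \<bullet> (B *v e) + (H *v (y k - y (k-1))) \<bullet> e"
      unfolding v_def by (simp add: inner_add_left Bt inner_diff_left)
    have e3: "A *v xt k + B *v y k - b = R" by (simp add: R_def)
    show ?thesis
      unfolding q_def e1 e2 qnorm2_def n1 n2 n3 n4 c_def e3
      by (simp add: algebra_simps power2_eq_square)
  qed
  have mn: "g (y k) + ereal (q (y k)) \<le> g w + ereal (q w)" for w
    using ymin[OF k, of w] unfolding q_def .
  have sg: "- v \<in> subdiff g (y k)"
    by (rule subgrad_min[OF g(1) g(3) mn qe])
  have lhs: "(H + ((\<tau> - \<tau> * \<theta> + \<theta>) * \<beta> / (\<tau> + \<theta>)) *\<^sub>R (transpose B ** B)) *v (y (k-1) - y k)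
           - (\<tau> / (\<tau> + \<theta>)) *\<^sub>R (transpose B *v (\<gamma> (k-1) - \<gamma> k))
        = - v - transpose B *v \<gamma>t k"
  proof -
    have a1: "(transpose B ** B) *v d = Bt *v P" unfolding Bt_def P_def
      by (simp add: matrix_vector_mul_assoc)
    have a2: "Bt *v (\<gamma> (k-1) - \<gamma> k) = ((\<tau> + \<theta>) * \<beta>) *\<^sub>R (Bt *v R) + (\<tau> * \<beta>) *\<^sub>R (Bt *v P)"
      unfolding dg by (simp add: matrix_vector_right_distrib matrix_vector_mult_scaleR del: transpose_matrix_vector)
    have a3: "Bt *v \<gamma>t k = Bt *v g0 - \<beta> *\<^sub>R (Bt *v R) - \<beta> *\<^sub>R (Bt *v P)"
      unfolding gtt by (simp add: matrix_vector_right_distrib matrix_vector_mult_diff_distrib matrix_vector_mult_scaleR scaleR_add_right del: transpose_matrix_vector)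
    have a4: "v = \<beta> *\<^sub>R (Bt *v R) - Bt *v g0 + (\<tau> * \<beta>) *\<^sub>R (Bt *v R) + (\<tau> * \<beta>) *\<^sub>R (Bt *v P) - H *v d"
      unfolding v_def ght d_def
      by (simp add: matrix_vector_right_distrib matrix_vector_mult_diff_distrib matrix_vector_mult_scaleR algebra_simps del: transpose_matrix_vector)
    have a5: "(H + ((\<tau> - \<tau> * \<theta> + \<theta>) * \<beta> / (\<tau> + \<theta>)) *\<^sub>R (transpose B ** B)) *v d
        = H *v d + ((\<tau> - \<tau> * \<theta> + \<theta>) * \<beta> / (\<tau> + \<theta>)) *\<^sub>R (Bt *v P)"
      by (simp add: matrix_vector_mult_add_rdistrib scaleR_matrix_vector_assoc[symmetric] a1 del: transpose_matrix_vector)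
    define c1 where "c1 = (\<tau> - \<tau> * \<theta> + \<theta>) * \<beta> / (\<tau> + \<theta>)"
    have sp: "\<tau> / (\<tau> + \<theta>) * ((\<tau> + \<theta>) * \<beta>) = \<tau> * \<beta>" using tp by simp
    have sq: "(1 - \<tau>) * \<beta> = c1 - \<tau> / (\<tau> + \<theta>) * (\<tau> * \<beta>)"
    proof -
      have "c1 - \<tau> / (\<tau> + \<theta>) * (\<tau> * \<beta>) = ((\<tau> - \<tau> * \<theta> + \<theta>) * \<beta> - \<tau> * (\<tau> * \<beta>)) / (\<tau> + \<theta>)"
        by (simp add: c1_def diff_divide_distrib)
      also have "\<dots> = ((1 - \<tau>) * \<beta>) * (\<tau> + \<theta>) / (\<tau> + \<theta>)"
        by (rule arg_cong[where f="\<lambda>z. z / (\<tau> + \<theta>)"]) (simp add: algebra_simps)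
      also have "\<dots> = (1 - \<tau>) * \<beta>" using tp by simp
      finally show ?thesis by simp
    qed
    have L: "H *v d + c1 *\<^sub>R (Bt *v P) - (\<tau> / (\<tau> + \<theta>)) *\<^sub>R (((\<tau> + \<theta>) * \<beta>) *\<^sub>R (Bt *v R) + (\<tau> * \<beta>) *\<^sub>R (Bt *v P))
        = H *v d + ((1 - \<tau>) * \<beta>) *\<^sub>R (Bt *v P) - (\<tau> * \<beta>) *\<^sub>R (Bt *v R)"
      unfolding sq by (simp only: scaleR_add_right scaleR_scaleR sp scaleR_diff_left) (simp add: algebra_simps)
    have Rr: "- v - Bt *v \<gamma>t k = H *v d + ((1 - \<tau>) * \<beta>) *\<^sub>R (Bt *v P) - (\<tau> * \<beta>) *\<^sub>R (Bt *v R)"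
      unfolding a3 a4 by (simp add: algebra_simps)
    show ?thesis
      unfolding d_def[symmetric]
      unfolding a5
      unfolding Bt_def[symmetric]
      unfolding a2 Rr c1_def[symmetric] L ..
  qed
  have p2: "(H + ((\<tau> - \<tau> * \<theta> + \<theta>) * \<beta> / (\<tau> + \<theta>)) *\<^sub>R (transpose B ** B)) *v (y (k-1) - y k)
           - (\<tau> / (\<tau> + \<theta>)) *\<^sub>R (transpose B *v (\<gamma> (k-1) - \<gamma> k))
           \<in> (\<lambda>w. w - transpose B *v \<gamma>t k) ` subdiff g (y k)"
    unfolding lhs using sg by blast
  have p4: "M_op G H B \<beta> \<tau> \<theta> ((x (k-1), y (k-1), \<gamma> (k-1)) - (x k, y k, \<gamma> k))
           \<in> T_op f g A B b (xt k, y k, \<gamma>t k)"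
    using p1 p2 p3 unfolding M_op_def T_op_def by auto
  show ?thesis using p1 p2 p3 p4 by blast
qed
end
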